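(* In the setting of the non-linear gradient flow (i) above, fix two indices $\lambda,\lambda'\in\{1,\dots,r_X\}$ with $y_\lambda>0$, $y_{\lambda'}>0$ and $\tilde y_\lambda\neq\tilde y_{\lambda'}$, and fix $\epsilon\in(0,\theta^\ast_\lambda)$. Suppose the initialization is $\theta^0_\kappa=\sigma\tilde\theta^0_\kappa$ for $\kappa\in\{\lambda,\lambda'\}$, with fixed $\tilde\theta^0_\kappa>0$ and a scale $\sigma>0$ small enough that $\theta^0_\lambda<\theta^\ast_\lambda-\epsilon$ and $\theta^0_{\lambda'}<\theta^\ast_{\lambda'}$. Let $t_\lambda=t_\lambda(\epsilon,\sigma)$ be the (unique) time at which $|\theta_\lambda(t)-\theta^\ast_\lambda|=\epsilon$. Then $$\lim_{\sigma\to 0}\theta_{\lambda'}(t_\lambda)=\begin{cases}\theta^\ast_{\lambda'} & \text{if } \tilde y_{\lambda'}>\tilde y_\lambda,\\ 0 & \text{if } \tilde y_{\lambda'}<\tilde y_\lambda.\end{cases}$$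
   Context: Setting: $\bm X=\sum_{\lambda=1}^{r_X}\sqrt{\mu_\lambda}\bm u_\lambda\bm v_\lambda^\top$ (SVD, $\mu_\lambda>0$ for $\lambda\le r_X$), labels $\bm y$ with $y_\lambda=\bm u_\lambda^\top\bm y\ge0$, $\theta^\ast_\lambda=y_\lambda/\sqrt{\mu_\lambda}$, $\tilde y_\lambda=\sqrt{\mu_\lambda}y_\lambda$. The non-linear dynamics is gradient flow on $\mathbf w$ of $\ell(\mathbf w)=\frac12\|\bm X\bm\theta(\mathbf w)-\bm y\|^2$ with $\bm\theta(\mathbf w)=\frac12\sum_\lambda w_\lambda^2\bm v_\lambda$, whose components are $\theta_\kappa(t)=\dfrac{\theta^0_\kappa\theta^\ast_\kappa}{\theta^0_\kappa-e^{-2\tilde y_\kappa t}(\theta^0_\kappa-\theta^\ast_\kappa)}$ for $\theta^\ast_\kappa\neq0$, where $\theta^0_\kappa=\frac12(w^0_\kappa)^2$. *)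

theory Defs
  imports "HOL-Analysis.Analysis"
begin

text \<open>Closed-form solution of the non-linear gradient flow for one component kappa
  with theta-star nonzero: initial value th0, target ths = theta-star, rate yt = y-tilde.\<close>
definition flow_comp :: "real \<Rightarrow> real \<Rightarrow> real \<Rightarrow> real \<Rightarrow> real" where
  "flow_comp th0 ths yt t = th0 * ths / (th0 - exp (- 2 * yt * t) * (th0 - ths))"

definition theta_star :: "real \<Rightarrow> real \<Rightarrow> real" where
  "theta_star mu y = y / sqrt mu"

definition y_tilde :: "real \<Rightarrow> real \<Rightarrow> real" where
  "y_tilde mu y = sqrt mu * y"

definition hit_time :: "real \<Rightarrow> real \<Rightarrow> real \<Rightarrow> real \<Rightarrow> real" where
  "hit_time th0 ths yt eps = (THE t. t \<ge> 0 \<and> \<bar>flow_comp th0 ths yt t - ths\<bar> = eps)"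

end

theory Submission imports Defs begin

lemma hit_time_eq:
  fixes a b eps th0 :: real
  assumes a: "a > 0" and b: "b > 0" and e: "eps > 0" and t0: "th0 > 0" and lt: "th0 < a - eps"
  shows "hit_time th0 a b eps = - ln (th0*eps/((a-eps)*(a-th0))) / (2*b)"
proof -
  define E where "E = th0*eps/((a-eps)*(a-th0))"
  have Epos: "E > 0" unfolding E_def using a e t0 lt by auto
  have E1: "E < 1" unfolding E_def using a e t0 lt
    by (simp add: divide_simps) (smt (verit) mult_strict_right_mono mult_less_cancel_left_pos)
  define T where "T = - ln E / (2*b)"
  have expT: "exp (-2*b*T) = E" unfolding T_def using b Epos by simp
  have key: "\<bar>flow_comp th0 a b t - a\<bar> = eps \<longleftrightarrow> exp (-2*b*t) = E" for t
  proof -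
    define x where "x = exp (-2*b*t)"
    have x: "x > 0" unfolding x_def by simp
    have D: "th0 + x*(a-th0) > 0" using x t0 lt e by (smt (verit) mult_pos_pos)
    have fc: "flow_comp th0 a b t - a = - (a*x*(a-th0)) / (th0 + x*(a-th0))"
      unfolding flow_comp_def x_def[symmetric] using D by (simp add: field_simps)
    have neg: "a*x*(a-th0) / (th0 + x*(a-th0)) > 0" using a x lt e D by simp
    have "\<bar>flow_comp th0 a b t - a\<bar> = eps \<longleftrightarrow> a*x*(a-th0) / (th0 + x*(a-th0)) = eps"
      using fc neg by (simp only: minus_divide_left[symmetric] abs_minus_cancel) (smt (verit))
    also have "\<dots> \<longleftrightarrow> a*x*(a-th0) = eps * (th0 + x*(a-th0))" using D by (simp add: divide_simps)
    also have "\<dots> \<longleftrightarrow> x * ((a-eps)*(a-th0)) = th0*eps" by (simp add: algebra_simps)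
    also have "\<dots> \<longleftrightarrow> x = E"
    proof -
      have P: "(a-eps)*(a-th0) > 0" using lt e t0 by simp
      show ?thesis unfolding E_def using P lt e by (auto simp add: eq_divide_eq)
    qed
    finally show ?thesis unfolding x_def .
  qed
  have T0: "T \<ge> 0" unfolding T_def using b Epos E1 by (simp add: divide_simps)
  have "hit_time th0 a b eps = T"
    unfolding hit_time_def
  proof (rule the_equality)
    show "0 \<le> T \<and> \<bar>flow_comp th0 a b T - a\<bar> = eps" using T0 key expT by simp
  next
    fix t assume "0 \<le> t \<and> \<bar>flow_comp th0 a b t - a\<bar> = eps"
    then have "exp (-2*b*t) = E" using key by simp
    then have "-2*b*t = ln E" by auto
    then show "t = T" unfolding T_def using b by (simp add: field_simps)
  qed
  then show ?thesis unfolding T_def E_def .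
qed
lemma flow_at_hit:
  fixes a b a' b' c c' eps s :: real
  assumes a: "a > 0" and b: "b > 0" and e: "eps > 0" and c: "c > 0" and c': "c' > 0"
    and a': "a' > 0" and s: "s > 0" and sl: "s * c < a - eps" and sl': "s * c' < a'"
  shows "flow_comp (s * c') a' b' (hit_time (s * c) a b eps) =
     c' * a' / (c' + s powr (b'/b - 1) * (c*eps/((a-eps)*(a-s*c))) powr (b'/b) * (a' - s*c'))"
proof -
  define K where "K = c*eps/((a-eps)*(a-s*c))"
  define r where "r = b'/b"
  have "s*c > 0" using s c by simp
  then have "a - eps > 0" "a - s*c > 0" using sl e by linarith+
  then have Kpos: "K > 0" unfolding K_def using e c by simp
  have "s*c*eps/((a-eps)*(a-s*c)) = s * K" unfolding K_def by simp
  then have h: "hit_time (s*c) a b eps = - ln (s*K)/(2*b)"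
    using hit_time_eq[OF a b e _ sl] s c by simp
  have "exp (-2*b'*(- ln (s*K)/(2*b))) = exp (r * ln (s*K))"
    unfolding r_def using b by (simp add: field_simps)
  also have "\<dots> = (s*K) powr r" using s Kpos by (simp add: powr_def)
  also have "\<dots> = s powr r * K powr r" using s Kpos by (simp add: powr_mult)
  also have "s powr r = s * s powr (r - 1)"
    using s powr_add[of s 1 "r-1"] by simp
  finally have ex: "exp (-2*b'*hit_time (s*c) a b eps) = s * (s powr (r-1) * K powr r)"
    using h by simp
  define X where "X = s powr (r-1) * K powr r"
  have X: "X \<ge> 0" unfolding X_def by simp
  have D: "c' + X*(a'-s*c') > 0" using X c' sl' by (smt (verit) mult_nonneg_nonneg)
  have "flow_comp (s * c') a' b' (hit_time (s * c) a b eps) =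
        s*c'*a' / (s*c' - s*X*(s*c'-a'))"
    unfolding flow_comp_def ex X_def by (simp add: mult.assoc)
  also have "\<dots> = c'*a' / (c' + X*(a'-s*c'))"
  proof -
    have "s*c' - s*X*(s*c'-a') = s * (c' + X*(a'-s*c'))" by (simp add: algebra_simps)
    then show ?thesis using s by simp
  qed
  finally show ?thesis unfolding X_def K_def r_def by (simp add: mult.assoc)
qed

theorem mainTheorem2:
  fixes mu y :: "nat \<Rightarrow> real" and rX l l' :: nat
    and eps :: real and th0t :: "nat \<Rightarrow> real"
  assumes mu_pos: "\<And>k. k \<in> {1..rX} \<Longrightarrow> mu k > 0"
    and y_nonneg: "\<And>k. k \<in> {1..rX} \<Longrightarrow> y k \<ge> 0"
    and l: "l \<in> {1..rX}" and l': "l' \<in> {1..rX}"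
    and yl: "y l > 0" and yl': "y l' > 0"
    and ydiff: "y_tilde (mu l) (y l) \<noteq> y_tilde (mu l') (y l')"
    and eps: "0 < eps" "eps < theta_star (mu l) (y l)"
    and th0t: "th0t l > 0" "th0t l' > 0"
  shows "(y_tilde (mu l') (y l') > y_tilde (mu l) (y l) \<longrightarrow>
            ((\<lambda>\<sigma>. flow_comp (\<sigma> * th0t l') (theta_star (mu l') (y l')) (y_tilde (mu l') (y l'))
                 (hit_time (\<sigma> * th0t l) (theta_star (mu l) (y l)) (y_tilde (mu l) (y l)) eps))
              \<longlongrightarrow> theta_star (mu l') (y l')) (at_right 0))
       \<and> (y_tilde (mu l') (y l') < y_tilde (mu l) (y l) \<longrightarrow>
            ((\<lambda>\<sigma>. flow_comp (\<sigma> * th0t l') (theta_star (mu l') (y l')) (y_tilde (mu l') (y l'))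
                 (hit_time (\<sigma> * th0t l) (theta_star (mu l) (y l)) (y_tilde (mu l) (y l)) eps))
              \<longlongrightarrow> 0) (at_right 0))"
proof -
  define a where "a = theta_star (mu l) (y l)"
  define b where "b = y_tilde (mu l) (y l)"
  define a' where "a' = theta_star (mu l') (y l')"
  define b' where "b' = y_tilde (mu l') (y l')"
  define c where "c = th0t l"
  define c' where "c' = th0t l'"
  define r where "r = b'/b"
  have mul: "mu l > 0" "mu l' > 0" using mu_pos l l' by auto
  have a: "a > 0" unfolding a_def theta_star_def using mul yl by simp
  have b: "b > 0" unfolding b_def y_tilde_def using mul yl by simp
  have a': "a' > 0" unfolding a'_def theta_star_def using mul yl' by simp
  have b': "b' > 0" unfolding b'_def y_tilde_def using mul yl' by simp
  have c: "c > 0" and c': "c' > 0" using th0t unfolding c_def c'_def by auto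
  have e: "eps > 0" "eps < a" using eps unfolding a_def by auto
  define Kf where "Kf = (\<lambda>s. c*eps/((a-eps)*(a-s*c)))"
  define G where "G = (\<lambda>s. c' * a' / (c' + s powr (r - 1) * Kf s powr r * (a' - s*c')))"
  define F where "F = (\<lambda>s. flow_comp (s * c') a' b' (hit_time (s * c) a b eps))"
  define \<delta> where "\<delta> = min ((a-eps)/c) (a'/c')"
  have dpos: "\<delta> > 0" unfolding \<delta>_def using e a' c c' by simp
  have ev: "eventually (\<lambda>s. F s = G s) (at_right 0)"
  proof (rule eventually_at_rightI[OF _ dpos])
    fix s assume "s \<in> {0<..<\<delta>}"
    then have s: "s > 0" "s < (a-eps)/c" "s < a'/c'" unfolding \<delta>_def by auto
    have "s*c < a - eps" using s(2) c by (simp add: pos_less_divide_eq)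
    moreover have "s*c' < a'" using s(3) c' by (simp add: pos_less_divide_eq)
    ultimately show "F s = G s" unfolding F_def G_def Kf_def r_def
      using flow_at_hit[OF a b e(1) c c' a' s(1)] by simp
  qed
  define K0 where "K0 = c*eps/((a-eps)*a)"
  have K0: "K0 > 0" unfolding K0_def using a e c by simp
  have Klim: "((\<lambda>s. Kf s powr r) \<longlongrightarrow> K0 powr r) (at_right 0)"
  proof -
    have "(Kf \<longlongrightarrow> c*eps/((a-eps)*(a-0*c))) (at_right 0)"
      unfolding Kf_def using a e by (intro tendsto_intros) auto
    then have "(Kf \<longlongrightarrow> K0) (at_right 0)" unfolding K0_def by simp
    then show ?thesis using K0 by (intro tendsto_intros) auto
  qed
  have P1: "r > 1 \<Longrightarrow> (G \<longlongrightarrow> a') (at_right 0)"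
  proof -
    assume r: "r > 1"
    have L1: "((\<lambda>s. s powr (r-1)) \<longlongrightarrow> 0) (at_right 0)"
      by (rule tendsto_zero_powrI) (use r in \<open>auto intro: tendsto_ident_at eventually_at_right_less[THEN eventually_mono]\<close>)
    have "(G \<longlongrightarrow> c'*a'/(c' + 0 * K0 powr r * (a' - 0*c'))) (at_right 0)"
      unfolding G_def using c' by (intro tendsto_intros L1 Klim) auto
    then show ?thesis using c' by simp
  qed
  have P2: "r < 1 \<Longrightarrow> (G \<longlongrightarrow> 0) (at_right 0)"
  proof -
    assume r: "r < 1"
    have L0: "((\<lambda>s. s powr (1-r)) \<longlongrightarrow> 0) (at_right 0)"
      by (rule tendsto_zero_powrI) (use r in \<open>auto intro: tendsto_ident_at eventually_at_right_less[THEN eventually_mono]\<close>)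
    have "LIM s at_right 0. inverse (s powr (1-r)) :> at_top"
      by (rule filterlim_inverse_at_top[OF L0])
         (auto intro: eventually_at_right_less[THEN eventually_mono])
    moreover have E: "eventually (\<lambda>s. inverse (s powr (1-r)) = s powr (r-1)) (at_right 0)"
      by (rule eventually_at_right_less[THEN eventually_mono]) (simp add: powr_minus[symmetric])
    ultimately have L1: "LIM s at_right 0. s powr (r-1) :> at_top"
      using filterlim_cong[OF refl refl E] by simp
    have L2: "((\<lambda>s. Kf s powr r * (a' - s*c')) \<longlongrightarrow> K0 powr r * (a' - 0*c')) (at_right 0)"
      by (intro tendsto_intros Klim)
    have "LIM s at_right 0. (Kf s powr r * (a' - s*c')) * s powr (r-1) :> at_top"
      by (rule filterlim_tendsto_pos_mult_at_top[OF L2 _ L1]) (use K0 a' in simp)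
    then have "LIM s at_right 0. c' + s powr (r - 1) * Kf s powr r * (a' - s*c') :> at_top"
      by (intro filterlim_tendsto_add_at_top[OF tendsto_const]) (simp add: ac_simps)
    then show ?thesis unfolding G_def
      by (intro tendsto_divide_0[OF tendsto_const] filterlim_at_top_imp_at_infinity)
  qed
  have FG: "(F \<longlongrightarrow> L) (at_right 0) \<longleftrightarrow> (G \<longlongrightarrow> L) (at_right 0)" for L
    using ev by (intro tendsto_cong) simp
  have rr: "b < b' \<longleftrightarrow> r > 1" "b' < b \<longleftrightarrow> r < 1" unfolding r_def using b by (auto simp: field_simps)
  show ?thesis
    using P1 P2 FG rr unfolding F_def a_def b_def a'_def b'_def c_def c'_def by auto
qed

end
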